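(* Let $k\ge1$, $G=(V,E)$ an inductively $k$-independent graph with $k$-independence ordering $v_1,\dots,v_n$, $f:2^V\to\mathbb{R}_{\ge0}$ submodular with $f(\emptyset)=0$, $\beta>0$ and $p\in(0,1)$. Let $S_{\mathrm{out}}$ be the output of algorithm PD-RAND (described in the context) and $\mathrm{OPT}=\max\{f(T):T\text{ independent in }G\}$. Then \[ \mathrm{OPT}\le\frac{k\max\{\frac{1-p}{p},1+\beta\}+\frac{1+\beta}{\beta}}{1-p}\;\mathbb{E}[f(S_{\mathrm{out}})]. \]
   Context: $N(v)$ is the neighbourhood of $v$ (excluding $v$); $G$ is inductively $k$-independent with $k$-independence ordering $v_1,\dots,v_n$ if for every $i$, $G[N(v_i)\cap\{v_i,\dots,v_n\}]$ has no independent set of size more than $k$. For $S\subseteq V$, $f_S(v)=f(S\cup\{v\})-f(S)$. Algorithm PD-RAND (parameters $\beta>0$, $p\in(0,1)$). Phase 1: start with $S=\emptyset$ (a stack) and $w_1=\dots=w_n=0$. For $i=1,\dots,n$: let $C_i=N(v_i)\cap S$ for the current $S$; if $f_S(v_i)>(1+\beta)\sum_{v_j\in C_i}w_j$, then with probability $p$ (independently of all else) set $w_i=f_S(v_i)-\sum_{v_j\in C_i}w_j$ (with $S$ the set before insertion) and push $v_i$ onto $S$; in all other cases leave $w_i=0$ and do not add $v_i$. Let $S_{\mathrm{end}}$ be $S$ at the end of Phase 1. Phase 2: with $S_{\mathrm{out}}=\emptyset$, pop vertices of $S_{\mathrm{end}}$ in reverse insertion order, adding a popped $v$ to $S_{\mathrm{out}}$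 whenever $S_{\mathrm{out}}\cup\{v\}$ is independent. Output $S_{\mathrm{out}}$. *)

theory Defs
  imports "HOL-Probability.Probability"
begin

definition simple_graph :: "'a list \<Rightarrow> ('a \<Rightarrow> 'a \<Rightarrow> bool) \<Rightarrow> bool" where
  "simple_graph vs E \<longleftrightarrow> distinct vs \<and> (\<forall>x y. E x y \<longrightarrow> E y x)
     \<and> (\<forall>x. \<not> E x x) \<and> (\<forall>x y. E x y \<longrightarrow> x \<in> set vs \<and> y \<in> set vs)"

definition independent :: "('a \<Rightarrow> 'a \<Rightarrow> bool) \<Rightarrow> 'a set \<Rightarrow> bool" where
  "independent E T \<longleftrightarrow> (\<forall>x\<in>T. \<forall>y\<in>T. \<not> E x y)"

definition k_independence_ordering :: "nat \<Rightarrow> 'a list \<Rightarrow> ('a \<Rightarrow> 'a \<Rightarrow> bool) \<Rightarrow> bool" where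
  "k_independence_ordering k vs E \<longleftrightarrow>
     (\<forall>i < length vs. \<forall>I. I \<subseteq> {u. E (vs ! i) u} \<inter> set (drop i vs) \<and> independent E I
        \<longrightarrow> card I \<le> k)"

definition submodular_on :: "'a set \<Rightarrow> ('a set \<Rightarrow> real) \<Rightarrow> bool" where
  "submodular_on V f \<longleftrightarrow>
     (\<forall>A B. A \<subseteq> V \<longrightarrow> B \<subseteq> V \<longrightarrow> f (A \<union> B) + f (A \<inter> B) \<le> f A + f B)"

text \<open>Phase 1 state: the stack S (as a list, most recently pushed element first) and weights w.\<close>
definition pd_step :: "('a \<Rightarrow> 'a \<Rightarrow> bool) \<Rightarrow> ('a set \<Rightarrow> real) \<Rightarrow> real \<Rightarrow> real
    \<Rightarrow> 'a list \<times> ('a \<Rightarrow> real) \<Rightarrow> 'a \<Rightarrow> ('a list \<times> ('a \<Rightarrow> real)) pmf" where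
  "pd_step E f \<beta> p st v =
     (let S = fst st; w = snd st;
          C = {u \<in> set S. E v u};
          g = f (set S \<union> {v}) - f (set S);
          sC = (\<Sum>u\<in>C. w u)
      in if g > (1 + \<beta>) * sC
         then map_pmf (\<lambda>b. if b then (v # S, w(v := g - sC)) else (S, w)) (bernoulli_pmf p)
         else return_pmf (S, w))"

definition pd_phase1 :: "'a list \<Rightarrow> ('a \<Rightarrow> 'a \<Rightarrow> bool) \<Rightarrow> ('a set \<Rightarrow> real) \<Rightarrow> real \<Rightarrow> real
    \<Rightarrow> ('a list \<times> ('a \<Rightarrow> real)) pmf" where
  "pd_phase1 vs E f \<beta> p =
     foldl (\<lambda>M v. bind_pmf M (\<lambda>st. pd_step E f \<beta> p st v)) (return_pmf ([], (\<lambda>_. 0))) vs"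

text \<open>Phase 2: pop the stack (head first = reverse insertion order), greedily keep independence.\<close>
definition pd_phase2 :: "('a \<Rightarrow> 'a \<Rightarrow> bool) \<Rightarrow> 'a list \<Rightarrow> 'a set" where
  "pd_phase2 E S = foldl (\<lambda>Out v. if independent E (Out \<union> {v}) then Out \<union> {v} else Out) {} S"

definition pd_rand :: "'a list \<Rightarrow> ('a \<Rightarrow> 'a \<Rightarrow> bool) \<Rightarrow> ('a set \<Rightarrow> real) \<Rightarrow> real \<Rightarrow> real \<Rightarrow> 'a set pmf" where
  "pd_rand vs E f \<beta> p = map_pmf (\<lambda>st. pd_phase2 E (fst st)) (pd_phase1 vs E f \<beta> p)"

definition OPT :: "'a list \<Rightarrow> ('a \<Rightarrow> 'a \<Rightarrow> bool) \<Rightarrow> ('a set \<Rightarrow> real) \<Rightarrow> real" where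
  "OPT vs E f = Max {f T | T. T \<subseteq> set vs \<and> independent E T}"

end

theory Submission
  imports Defs
begin


fun valid :: "('a set \<Rightarrow> real) \<Rightarrow> ('a \<Rightarrow> 'a \<Rightarrow> bool) \<Rightarrow> 'a list \<Rightarrow> ('a \<Rightarrow> real) \<Rightarrow> bool" where
  "valid f E [] w = True"
| "valid f E (s#S) w = (valid f E S w \<and> s \<notin> set S \<and>
      w s + (\<Sum>x\<in>{x\<in>set S. E s x}. w x) = f (insert s (set S)) - f (set S))"

fun below :: "'a list \<Rightarrow> 'a \<Rightarrow> 'a set" where
  "below [] u = {}"
| "below (s#S) u = (if u = s then set S else below S u)"

lemma below_sub: "below S u \<subseteq> set S"
  by (induction S) auto

lemma valid_cong: "(\<forall>x\<in>set S. w x = w' x) \<Longrightarrow> valid f E S w = valid f E S w'"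
proof (induction S)
  case Nil then show ?case by simp
next
  case (Cons s S)
  have "(\<Sum>x\<in>{x\<in>set S. E s x}. w x) = (\<Sum>x\<in>{x\<in>set S. E s x}. w' x)"
    using Cons.prems by (intro sum.cong) auto
  with Cons show ?case by simp
qed

lemma sum_UN_le_nonneg:
  fixes w :: "'a \<Rightarrow> real"
  assumes "finite T" "\<And>u. u \<in> T \<Longrightarrow> finite (C u)" "\<And>x. w x \<ge> 0"
  shows "(\<Sum>x\<in>(\<Union>u\<in>T. C u). w x) \<le> (\<Sum>u\<in>T. \<Sum>x\<in>C u. w x)"
  using assms
proof (induction T rule: finite_induct)
  case empty then show ?case by simp
next
  case (insert a T)
  have "(\<Sum>x\<in>(\<Union>u\<in>insert a T. C u). w x) = (\<Sum>x\<in>C a \<union> (\<Union>u\<in>T. C u). w x)" by simp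
  also have "\<dots> \<le> (\<Sum>x\<in>C a. w x) + (\<Sum>x\<in>(\<Union>u\<in>T. C u). w x)"
    using insert by (subst sum_Un) (auto intro: sum_nonneg)
  also have "\<dots> \<le> (\<Sum>u\<in>insert a T. \<Sum>x\<in>C u. w x)" using insert by simp
  finally show ?case .
qed

lemma L_sub:
  assumes "valid f E S w" "set S \<subseteq> V" "submodular_on V f" "f {} = 0" "T \<subseteq> set S"
  shows "(\<Sum>u\<in>T. w u + (\<Sum>x\<in>{x\<in>below S u. E u x}. w x)) \<le> f T"
  using assms
proof (induction S arbitrary: T)
  case Nil then show ?case by simp
next
  case (Cons s S)
  show ?case
  proof (cases "s \<in> T")
    case False
    then have T: "T \<subseteq> set S" using Cons.prems by auto
    have "(\<Sum>u\<in>T. w u + (\<Sum>x\<in>{x\<in>below (s#S) u. E u x}. w x))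
        = (\<Sum>u\<in>T. w u + (\<Sum>x\<in>{x\<in>below S u. E u x}. w x))"
      using False by (intro sum.cong) auto
    then show ?thesis using Cons T by simp
  next
    case True
    define T' where "T' = T - {s}"
    have T': "T' \<subseteq> set S" using Cons.prems T'_def by auto
    have sS: "s \<notin> set S" using Cons.prems by simp
    have fin: "finite T" using Cons.prems(5) finite_subset by blast
    have "(\<Sum>u\<in>T. w u + (\<Sum>x\<in>{x\<in>below (s#S) u. E u x}. w x))
        = (w s + (\<Sum>x\<in>{x\<in>set S. E s x}. w x)) + (\<Sum>u\<in>T'. w u + (\<Sum>x\<in>{x\<in>below (s#S) u. E u x}. w x))"
      using True fin T'_def by (simp add: sum.remove)
    also have "(\<Sum>u\<in>T'. w u + (\<Sum>x\<in>{x\<in>below (s#S) u. E u x}. w x))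
        = (\<Sum>u\<in>T'. w u + (\<Sum>x\<in>{x\<in>below S u. E u x}. w x))"
      using T'_def by (intro sum.cong) auto
    also have "\<dots> \<le> f T'" using Cons T' by simp
    also have "w s + (\<Sum>x\<in>{x\<in>set S. E s x}. w x) = f (insert s (set S)) - f (set S)"
      using Cons.prems by simp
    also have "f (insert s (set S)) - f (set S) + f T' \<le> f T"
    proof -
      have "f (T \<union> set S) + f (T \<inter> set S) \<le> f T + f (set S)"
        using Cons.prems unfolding submodular_on_def by (meson order_trans set_subset_Cons)
      moreover have "T \<union> set S = insert s (set S)" using True Cons.prems by auto
      moreover have "T \<inter> set S = T'" using T'_def sS Cons.prems(5) by auto
      ultimately show ?thesis by simp
    qed
    finally show ?thesis by simp
  qed
qed

lemma p2_struct:
  assumes sym: "\<forall>x y. E x y \<longrightarrow> E y x" and irr: "\<forall>x. \<not> E x x"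
  shows "independent E Out0 \<Longrightarrow>
    Out0 \<subseteq> foldl (\<lambda>Out v. if independent E (Out \<union> {v}) then Out \<union> {v} else Out) Out0 S \<and>
    foldl (\<lambda>Out v. if independent E (Out \<union> {v}) then Out \<union> {v} else Out) Out0 S \<subseteq> Out0 \<union> set S \<and>
    (\<forall>x\<in>set S - foldl (\<lambda>Out v. if independent E (Out \<union> {v}) then Out \<union> {v} else Out) Out0 S.
       \<exists>u\<in>foldl (\<lambda>Out v. if independent E (Out \<union> {v}) then Out \<union> {v} else Out) Out0 S.
          E u x \<and> (u \<in> Out0 \<or> x \<in> below S u))"
proof (induction S arbitrary: Out0)
  case Nil then show ?case by simp
next
  case (Cons s S)
  let ?st = "(\<lambda>Out v. if independent E (Out \<union> {v}) then Out \<union> {v} else Out)"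
  define Out1 where "Out1 = ?st Out0 s"
  have ind1: "independent E Out1" using Cons.prems unfolding Out1_def by auto
  have eq: "foldl ?st Out0 (s#S) = foldl ?st Out1 S" unfolding Out1_def by simp
  define T where "T = foldl ?st Out1 S"
  have IH: "Out1 \<subseteq> T \<and> T \<subseteq> Out1 \<union> set S \<and>
    (\<forall>x\<in>set S - T. \<exists>u\<in>T. E u x \<and> (u \<in> Out1 \<or> x \<in> below S u))"
    using Cons.IH[OF ind1] unfolding T_def .
  have O01: "Out0 \<subseteq> Out1" "Out1 \<subseteq> insert s Out0" unfolding Out1_def by auto
  have bel: "x \<in> below S u \<Longrightarrow> x \<in> below (s#S) u" for x u
    using below_sub[of S u] by auto
  have "\<forall>x\<in>set (s#S) - T. \<exists>u\<in>T. E u x \<and> (u \<in> Out0 \<or> x \<in> below (s#S) u)"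
  proof
    fix x assume x: "x \<in> set (s#S) - T"
    show "\<exists>u\<in>T. E u x \<and> (u \<in> Out0 \<or> x \<in> below (s#S) u)"
    proof (cases "x = s")
      case True
      then have "s \<notin> Out1" using x IH by auto
      then have "\<not> independent E (Out0 \<union> {s})" unfolding Out1_def by (auto split: if_splits)
      then obtain y where "y \<in> Out0" "E y s"
        using Cons.prems sym irr unfolding independent_def by blast
      then show ?thesis using True IH O01 by blast
    next
      case False
      then have "x \<in> set S - T" using x by auto
      then obtain u where u: "u \<in> T" "E u x" "u \<in> Out1 \<or> x \<in> below S u" using IH by blast
      show ?thesis
      proof (cases "u \<in> Out0")
        case True then show ?thesis using u by blast
      next
        case False
        then have "u = s \<or> x \<in> below S u" using u O01 by auto
        then have "x \<in> below (s#S) u" using bel \<open>x \<in> set S - T\<close> by auto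
        then show ?thesis using u by blast
      qed
    qed
  qed
  then show ?case using IH O01 eq T_def by auto
qed

lemma phase2_bound:
  assumes "simple_graph vs E" "valid f E S w" "set S \<subseteq> set vs" "submodular_on (set vs) f"
    "f {} = 0" "\<And>x. w x \<ge> 0"
  shows "(\<Sum>u\<in>set S. w u) \<le> f (pd_phase2 E S)"
proof -
  define T where "T = pd_phase2 E S"
  have sym: "\<forall>x y. E x y \<longrightarrow> E y x" and irr: "\<forall>x. \<not> E x x"
    using assms(1) unfolding simple_graph_def by auto
  have st: "T \<subseteq> set S" "\<forall>x\<in>set S - T. \<exists>u\<in>T. E u x \<and> x \<in> below S u"
    using p2_struct[OF sym irr, of "{}" S] unfolding T_def pd_phase2_def independent_def by auto
  let ?C = "\<lambda>u. {x\<in>below S u. E u x}"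
  have finT: "finite T" using st(1) finite_subset by blast
  have "(\<Sum>u\<in>set S. w u) = (\<Sum>u\<in>T. w u) + (\<Sum>u\<in>set S - T. w u)"
    using st(1) by (metis add.commute finite_set sum.subset_diff)
  also have "(\<Sum>u\<in>set S - T. w u) \<le> (\<Sum>x\<in>(\<Union>u\<in>T. ?C u). w x)"
    using st(2) assms(6) by (intro sum_mono2) (auto intro: finite_subset[OF _ finite_set[of S]] dest: subsetD[OF below_sub])
  also have "\<dots> \<le> (\<Sum>u\<in>T. \<Sum>x\<in>?C u. w x)"
    using finT assms(6) by (intro sum_UN_le_nonneg) (auto intro: finite_subset[OF _ finite_set[of S]] dest: subsetD[OF below_sub])
  also have "(\<Sum>u\<in>T. w u) + (\<Sum>u\<in>T. \<Sum>x\<in>?C u. w x) = (\<Sum>u\<in>T. w u + (\<Sum>x\<in>?C u. w x))"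
    by (simp add: sum.distrib)
  also have "\<dots> \<le> f T" using L_sub[OF assms(2,3,4,5) st(1)] .
  finally show ?thesis unfolding T_def by simp
qed



lemma abel_aux:
  fixes q H :: "nat \<Rightarrow> real"
  shows "(\<And>i. Suc i < Suc m \<Longrightarrow> q (Suc i) \<le> q i) \<Longrightarrow> (\<And>i. i \<le> Suc m \<Longrightarrow> H i \<ge> 0) \<Longrightarrow>
    (\<Sum>i<Suc m. q i * (H (Suc i) - H i)) \<ge> q m * H (Suc m) - q 0 * H 0"
proof (induction m)
  case 0 then show ?case by (simp add: algebra_simps)
next
  case (Suc m)
  have IH: "(\<Sum>i<Suc m. q i * (H (Suc i) - H i)) \<ge> q m * H (Suc m) - q 0 * H 0"
    using Suc by auto
  have "q (Suc m) \<le> q m" using Suc(2)[of m] by auto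
  moreover have "H (Suc m) \<ge> 0" using Suc by auto
  ultimately have "q (Suc m) * H (Suc m) \<le> q m * H (Suc m)" by (simp add: mult_right_mono)
  then show ?case using IH by (simp add: algebra_simps)
qed

lemma abel:
  fixes q H :: "nat \<Rightarrow> real"
  assumes "\<And>i. Suc i < n \<Longrightarrow> q (Suc i) \<le> q i" "\<And>i. i \<le> n \<Longrightarrow> H i \<ge> 0"
    "\<And>i. i < n \<Longrightarrow> q i \<ge> 0" "0 < n \<Longrightarrow> q 0 \<le> p" "p \<ge> 0"
  shows "(\<Sum>i<n. q i * (H (Suc i) - H i)) \<ge> - p * H 0"
proof (cases "n = 0")
  case True then show ?thesis using assms(2)[of 0] assms(5) by simp
next
  case False
  then have "(\<Sum>i<n. q i * (H (Suc i) - H i)) \<ge> q (n - 1) * H n - q 0 * H 0"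
    using abel_aux[of "n - 1" q H] assms(1,2) by auto
  moreover have "q (n - 1) * H n \<ge> 0" using assms(2,3) False by simp
  moreover have "q 0 * H 0 \<le> p * H 0" using assms(2)[of 0] assms(4) False by (simp add: mult_right_mono)
  ultimately show ?thesis by simp
qed

lemma det_lower:
  assumes "submodular_on V h"
  shows "distinct L \<Longrightarrow> set L \<subseteq> V \<Longrightarrow> A \<subseteq> set L \<Longrightarrow>
    h A \<ge> h {} + (\<Sum>i<length L. (if L!i \<in> A then 1 else 0) * (h (set (take (Suc i) L)) - h (set (take i L))))"
proof (induction L arbitrary: A rule: rev_induct)
  case Nil then show ?case by simp
next
  case (snoc x L0)
  define A' where "A' = A - {x}"
  have A': "A' \<subseteq> set L0" using snoc.prems A'_def by auto
  have IH: "h A' \<ge> h {} + (\<Sum>i<length L0. (if L0!i \<in> A' then 1 else 0) * (h (set (take (Suc i) L0)) - h (set (take i L0))))"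
    using snoc A' by auto
  have xL0: "x \<notin> set L0" using snoc.prems by simp
  have "(\<Sum>i<length (L0@[x]). (if (L0@[x])!i \<in> A then 1 else 0) * (h (set (take (Suc i) (L0@[x]))) - h (set (take i (L0@[x])))))
     = (\<Sum>i<length L0. (if (L0@[x])!i \<in> A then 1 else 0) * (h (set (take (Suc i) (L0@[x]))) - h (set (take i (L0@[x])))))
       + (if x \<in> A then 1 else 0) * (h (insert x (set L0)) - h (set L0))"
    by simp
  also have "(\<Sum>i<length L0. (if (L0@[x])!i \<in> A then 1 else 0) * (h (set (take (Suc i) (L0@[x]))) - h (set (take i (L0@[x])))))
     = (\<Sum>i<length L0. (if L0!i \<in> A' then 1 else 0) * (h (set (take (Suc i) L0)) - h (set (take i L0))))"
  proof (intro sum.cong refl)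
    fix i assume "i \<in> {..<length L0}"
    then have i: "i < length L0" by simp
    then have "L0 ! i \<noteq> x" using xL0 nth_mem by metis
    then show "(if (L0@[x])!i \<in> A then 1 else 0) * (h (set (take (Suc i) (L0@[x]))) - h (set (take i (L0@[x]))))
      = (if L0!i \<in> A' then 1 else 0) * (h (set (take (Suc i) L0)) - h (set (take i L0)))"
      using i by (simp add: nth_append A'_def)
  qed
  finally have eq: "(\<Sum>i<length (L0@[x]). (if (L0@[x])!i \<in> A then 1 else 0) * (h (set (take (Suc i) (L0@[x]))) - h (set (take i (L0@[x])))))
     = (\<Sum>i<length L0. (if L0!i \<in> A' then 1 else 0) * (h (set (take (Suc i) L0)) - h (set (take i L0))))
       + (if x \<in> A then 1 else 0) * (h (insert x (set L0)) - h (set L0))" .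
  show ?case
  proof (cases "x \<in> A")
    case False
    then have "A' = A" unfolding A'_def by auto
    then show ?thesis using eq IH False by simp
  next
    case True
    have "h (A \<union> set L0) + h (A \<inter> set L0) \<le> h A + h (set L0)"
      using assms snoc.prems unfolding submodular_on_def by auto
    moreover have "A \<union> set L0 = insert x (set L0)" using True snoc.prems by auto
    moreover have "A \<inter> set L0 = A'" using A'_def xL0 snoc.prems by auto
    ultimately show ?thesis using eq IH True by simp
  qed
qed

lemma bfns:
  fixes N :: "'a set pmf" and h :: "'a set \<Rightarrow> real"
  assumes sub: "\<forall>A\<in>set_pmf N. A \<subseteq> set L" and nn: "\<forall>A. A \<subseteq> set L \<longrightarrow> h A \<ge> 0"
    and sm: "submodular_on (set L) h"
    and mar: "\<forall>u\<in>set L. measure_pmf.expectation N (\<lambda>A. if u \<in> A then 1 else 0) \<le> p"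
    and p0: "p \<ge> 0"
  shows "(1 - p) * h {} \<le> measure_pmf.expectation N h"
proof -
  define q where "q u = measure_pmf.expectation N (\<lambda>A. if u \<in> A then 1 else (0::real))" for u
  define L' where "L' = sort_key (\<lambda>u. - q u) (remdups L)"
  have L': "distinct L'" "set L' = set L" unfolding L'_def by (auto simp: distinct_sort)
  have srt: "sorted (map (\<lambda>u. - q u) L')" unfolding L'_def by (rule sorted_sort_key)
  have finN: "finite (set_pmf N)"
  proof -
    have "set_pmf N \<subseteq> Pow (set L)" using sub by auto
    then show ?thesis by (rule finite_subset) simp
  qed
  have int: "integrable N g" for g :: "'a set \<Rightarrow> real" using finN by (rule integrable_measure_pmf_finite)
  define n where "n = length L'"
  define d where "d i = h (set (take (Suc i) L')) - h (set (take i L'))" for i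
  have low: "h A \<ge> h {} + (\<Sum>i<n. (if L'!i \<in> A then 1 else 0) * d i)" if "A \<in> set_pmf N" for A
    using det_lower[OF sm, of L' A] L' sub that unfolding n_def d_def by auto
  have "measure_pmf.expectation N h \<ge> measure_pmf.expectation N (\<lambda>A. h {} + (\<Sum>i<n. (if L'!i \<in> A then 1 else 0) * d i))"
    using low by (intro integral_mono_AE int) (auto simp: AE_measure_pmf_iff)
  also have "measure_pmf.expectation N (\<lambda>A. h {} + (\<Sum>i<n. (if L'!i \<in> A then 1 else 0) * d i))
      = h {} + (\<Sum>i<n. q (L'!i) * d i)"
    by (simp add: integral_add int integral_sum q_def)
  finally have e1: "measure_pmf.expectation N h \<ge> h {} + (\<Sum>i<n. q (L'!i) * d i)" .
  have qnn: "q u \<ge> 0" for u unfolding q_def by (intro integral_nonneg_AE) auto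
  have "(\<Sum>i<n. q (L'!i) * d i) \<ge> - p * h (set (take 0 L'))"
    unfolding d_def
  proof (rule abel[where q = "\<lambda>i. q (L'!i)" and H = "\<lambda>i. h (set (take i L'))"])
    fix i assume "Suc i < n"
    then show "q (L'!Suc i) \<le> q (L'!i)"
      using srt unfolding n_def by (auto simp: sorted_iff_nth_mono)
  next
    fix i show "h (set (take i L')) \<ge> 0" using nn L' set_take_subset by metis
  next
    fix i show "q (L'!i) \<ge> 0" by (rule qnn)
  next
    assume "0 < n"
    then show "q (L'!0) \<le> p" using mar L' unfolding n_def q_def by (metis nth_mem)
  next
    show "p \<ge> 0" by (rule p0)
  qed
  then show ?thesis using e1 by (simp add: algebra_simps)
qed



definition Mm :: "'a list \<Rightarrow> ('a \<Rightarrow> 'a \<Rightarrow> bool) \<Rightarrow> ('a set \<Rightarrow> real) \<Rightarrow> real \<Rightarrow> real \<Rightarrow> nat \<Rightarrow> ('a list \<times> ('a \<Rightarrow> real)) pmf" where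
  "Mm vs E f \<beta> p m = foldl (\<lambda>M v. bind_pmf M (\<lambda>st. pd_step E f \<beta> p st v)) (return_pmf ([], (\<lambda>_. 0))) (take m vs)"

lemma Mm_0: "Mm vs E f \<beta> p 0 = return_pmf ([], (\<lambda>_. 0))" by (simp add: Mm_def)

lemma Mm_Suc: "m < length vs \<Longrightarrow> Mm vs E f \<beta> p (Suc m) = bind_pmf (Mm vs E f \<beta> p m) (\<lambda>st. pd_step E f \<beta> p st (vs!m))"
  by (simp add: Mm_def take_Suc_conv_app_nth)

lemma Mm_full: "Mm vs E f \<beta> p (length vs) = pd_phase1 vs E f \<beta> p"
  by (simp add: Mm_def pd_phase1_def)

lemma step_exp:
  assumes "0 \<le> p" "p \<le> 1"
  shows "measure_pmf.expectation (pd_step E f \<beta> p (S,w) v) G =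
    (if f (insert v (set S)) - f (set S) > (1+\<beta>) * (\<Sum>u\<in>{u\<in>set S. E v u}. w u)
     then p * G (v#S, w(v := f (insert v (set S)) - f (set S) - (\<Sum>u\<in>{u\<in>set S. E v u}. w u)))
          + (1-p) * G (S,w)
     else G (S,w))"
  using assms by (simp add: pd_step_def Let_def algebra_simps)

lemma step_set:
  assumes "st' \<in> set_pmf (pd_step E f \<beta> p (S,w) v)"
  shows "st' = (S,w) \<or> (f (insert v (set S)) - f (set S) > (1+\<beta>) * (\<Sum>u\<in>{u\<in>set S. E v u}. w u)
     \<and> st' = (v#S, w(v := f (insert v (set S)) - f (set S) - (\<Sum>u\<in>{u\<in>set S. E v u}. w u))))"
  using assms by (auto simp: pd_step_def Let_def split: if_splits)

lemma step_finite: "finite (set_pmf (pd_step E f \<beta> p st v))"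
proof -
  obtain S w where "st = (S,w)" by force
  then have "set_pmf (pd_step E f \<beta> p st v) \<subseteq> {(S,w), (v#S, w(v := f (insert v (set S)) - f (set S) - (\<Sum>u\<in>{u\<in>set S. E v u}. w u)))}"
    using step_set[of _ E f \<beta> p S w v] by auto
  then show ?thesis by (rule finite_subset) simp
qed

lemma exp_bind:
  fixes G :: "'b \<Rightarrow> real"
  assumes "finite (set_pmf M)" "\<And>x. finite (set_pmf (F x))"
  shows "measure_pmf.expectation (bind_pmf M F) G = measure_pmf.expectation M (\<lambda>x. measure_pmf.expectation (F x) G)"
proof -
  have "measure_pmf.expectation (bind_pmf M F) G = (\<Sum>a\<in>set_pmf M. pmf M a *\<^sub>R measure_pmf.expectation (F a) G)"
    using assms by (intro pmf_expectation_bind) auto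
  also have "\<dots> = measure_pmf.expectation M (\<lambda>x. measure_pmf.expectation (F x) G)"
    using assms by (subst integral_measure_pmf[of "set_pmf M"]) auto
  finally show ?thesis .
qed

lemma exp_mono:
  fixes G H :: "'b \<Rightarrow> real"
  assumes "finite (set_pmf M)" "\<And>x. x \<in> set_pmf M \<Longrightarrow> G x \<le> H x"
  shows "measure_pmf.expectation M G \<le> measure_pmf.expectation M H"
  using assms by (intro integral_mono_AE integrable_measure_pmf_finite) (auto simp: AE_measure_pmf_iff)

definition inv1 :: "'a list \<Rightarrow> ('a \<Rightarrow> 'a \<Rightarrow> bool) \<Rightarrow> ('a set \<Rightarrow> real) \<Rightarrow> real \<Rightarrow> nat \<Rightarrow> 'a list \<times> ('a \<Rightarrow> real) \<Rightarrow> bool" where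
  "inv1 vs E f \<beta> m st \<longleftrightarrow> valid f E (fst st) (snd st) \<and> set (fst st) \<subseteq> set (take m vs)
     \<and> (\<forall>u. snd st u \<ge> 0) \<and> f (set (fst st)) \<le> (1+\<beta>)/\<beta> * (\<Sum>u\<in>set (fst st). snd st u)"

lemma notin_take: assumes "distinct vs" "m < length vs" shows "vs!m \<notin> set (take m vs)"
proof -
  have "distinct (take m vs @ [vs!m])" using assms by (metis distinct_take take_Suc_conv_app_nth)
  then show ?thesis by simp
qed

definition idx :: "'a list \<Rightarrow> 'a \<Rightarrow> nat" where
  "idx vs u = (THE i. i < length vs \<and> vs!i = u)"

definition cnt :: "'a list \<Rightarrow> ('a \<Rightarrow> 'a \<Rightarrow> bool) \<Rightarrow> 'a set \<Rightarrow> nat \<Rightarrow> 'a \<Rightarrow> nat" where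
  "cnt vs E Opt m u = card {y \<in> Opt \<inter> set (take m vs). E y u \<and> idx vs u < idx vs y}"

definition Phi :: "'a list \<Rightarrow> ('a \<Rightarrow> 'a \<Rightarrow> bool) \<Rightarrow> ('a set \<Rightarrow> real) \<Rightarrow> real \<Rightarrow> real \<Rightarrow> 'a set \<Rightarrow> nat
    \<Rightarrow> 'a list \<times> ('a \<Rightarrow> real) \<Rightarrow> real" where
  "Phi vs E f \<beta> p Opt m st = f (set (fst st) \<union> (Opt \<inter> set (take m vs))) - f (set (fst st))
     - (1+\<beta>) * (\<Sum>u\<in>set (fst st). snd st u * real (cnt vs E Opt m u))
     - (1-p)/p * (\<Sum>u\<in>set (fst st) \<inter> Opt. snd st u)"

lemma idx_nth: "distinct vs \<Longrightarrow> i < length vs \<Longrightarrow> idx vs (vs!i) = i"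
  unfolding idx_def by (rule the_equality) (auto simp: nth_eq_iff_index_eq)

lemma idx_take: assumes "distinct vs" "u \<in> set (take m vs)" shows "idx vs u < m"
proof -
  obtain j where j: "j < length (take m vs)" "take m vs ! j = u" using assms(2) by (auto simp: in_set_conv_nth)
  then have "u = vs ! j" "j < m" "j < length vs" by auto
  then show ?thesis using idx_nth[OF assms(1)] by simp
qed

lemma cnt_Suc:
  assumes d: "distinct vs" and m: "m < length vs" and u: "u \<in> set (take m vs)"
  shows "cnt vs E Opt (Suc m) u = cnt vs E Opt m u + (if vs!m \<in> Opt \<and> E (vs!m) u then 1 else 0)"
proof -
  let ?A = "{y \<in> Opt \<inter> set (take m vs). E y u \<and> idx vs u < idx vs y}"
  have tk: "set (take (Suc m) vs) = insert (vs!m) (set (take m vs))"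
    using m by (simp add: take_Suc_conv_app_nth)
  have iv: "idx vs (vs!m) = m" using idx_nth[OF d m] .
  have iu: "idx vs u < m" using idx_take[OF d u] .
  have nv: "vs!m \<notin> ?A" using notin_take[OF d m] by auto
  have eq: "{y \<in> Opt \<inter> set (take (Suc m) vs). E y u \<and> idx vs u < idx vs y}
     = (if vs!m \<in> Opt \<and> E (vs!m) u then insert (vs!m) ?A else ?A)"
    using tk iv iu by auto
  have fin: "finite ?A" by (rule finite_subset[of _ "set (take m vs)"]) auto
  show ?thesis unfolding cnt_def eq using fin nv by auto
qed

lemma cnt_new:
  assumes d: "distinct vs" and m: "m < length vs"
  shows "cnt vs E Opt (Suc m) (vs!m) = 0"
proof -
  have "{y \<in> Opt \<inter> set (take (Suc m) vs). E y (vs!m) \<and> idx vs (vs!m) < idx vs y} = {}"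
    using idx_take[OF d, of _ "Suc m"] idx_nth[OF d m] by fastforce
  then show ?thesis unfolding cnt_def by simp
qed

lemma idx_in: assumes "distinct vs" "y \<in> set vs" shows "idx vs y < length vs" "vs ! idx vs y = y"
proof -
  obtain j where "j < length vs" "vs ! j = y" using assms(2) by (auto simp: in_set_conv_nth)
  then show "idx vs y < length vs" "vs ! idx vs y = y" using idx_nth[OF assms(1)] by auto
qed

lemma cnt_bound:
  assumes sg: "simple_graph vs E" and ko: "k_independence_ordering k vs E"
    and oi: "independent E Opt" and os: "Opt \<subseteq> set vs" and u: "u \<in> set vs"
  shows "cnt vs E Opt (length vs) u \<le> k" "u \<in> Opt \<Longrightarrow> cnt vs E Opt (length vs) u = 0"
proof -
  have d: "distinct vs" and sym: "\<forall>x y. E x y \<longrightarrow> E y x" using sg unfolding simple_graph_def by auto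
  define I where "I = {y \<in> Opt \<inter> set (take (length vs) vs). E y u \<and> idx vs u < idx vs y}"
  define i where "i = idx vs u"
  have i: "i < length vs" "vs ! i = u" using idx_in[OF d u] i_def by auto
  have "I \<subseteq> {x. E (vs ! i) x} \<inter> set (drop i vs)"
  proof
    fix y assume y: "y \<in> I"
    then have yv: "y \<in> set vs" "E y u" "i < idx vs y" using os unfolding I_def i_def by auto
    have j: "idx vs y < length vs" "vs ! idx vs y = y" using idx_in[OF d yv(1)] by auto
    have "drop i vs ! (idx vs y - i) = y" using j yv(3) i by simp
    moreover have "idx vs y - i < length (drop i vs)" using j yv(3) by simp
    ultimately have "y \<in> set (drop i vs)" by (metis nth_mem)
    then show "y \<in> {x. E (vs ! i) x} \<inter> set (drop i vs)" using yv sym i by auto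
  qed
  moreover have "independent E I" using oi unfolding independent_def I_def by auto
  ultimately show "cnt vs E Opt (length vs) u \<le> k"
    using ko i unfolding k_independence_ordering_def cnt_def I_def[symmetric] by blast
  assume "u \<in> Opt"
  then have "I = {}" using oi unfolding I_def independent_def by auto
  then show "cnt vs E Opt (length vs) u = 0" unfolding cnt_def I_def[symmetric] by simp
qed

context
  fixes vs :: "'a list" and E :: "'a \<Rightarrow> 'a \<Rightarrow> bool" and f :: "'a set \<Rightarrow> real" and \<beta> p :: real
  assumes sg: "simple_graph vs E" and sm: "submodular_on (set vs) f" and f0: "f {} = 0"
    and bpos: "\<beta> > 0" and p0: "0 < p" and p1: "p < 1"
begin

abbreviation "M m \<equiv> Mm vs E f \<beta> p m"

lemma dist: "distinct vs" using sg unfolding simple_graph_def by auto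

lemma inv_step:
  assumes m: "m < length vs" and inv: "inv1 vs E f \<beta> m (S,w)"
    and st': "st' \<in> set_pmf (pd_step E f \<beta> p (S,w) (vs!m))"
  shows "inv1 vs E f \<beta> (Suc m) st'"
proof -
  let ?v = "vs!m"
  let ?g = "f (insert ?v (set S)) - f (set S)"
  let ?sC = "\<Sum>u\<in>{u\<in>set S. E ?v u}. w u"
  have tk: "set (take (Suc m) vs) = insert ?v (set (take m vs))"
    using m by (simp add: take_Suc_conv_app_nth)
  have I: "valid f E S w" "set S \<subseteq> set (take m vs)" "\<And>u. w u \<ge> 0"
      "f (set S) \<le> (1+\<beta>)/\<beta> * (\<Sum>u\<in>set S. w u)"
    using inv unfolding inv1_def by auto
  have vS: "?v \<notin> set S" using I(2) notin_take[OF dist m] by auto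
  have sC0: "?sC \<ge> 0" using I(3) by (intro sum_nonneg) auto
  from step_set[OF st']
  show ?thesis
  proof
    assume "st' = (S,w)"
    then show ?thesis using inv tk unfolding inv1_def by auto
  next
    assume A: "?g > (1+\<beta>) * ?sC \<and> st' = (?v#S, w(?v := ?g - ?sC))"
    define w' where "w' = w(?v := ?g - ?sC)"
    have st'': "st' = (?v#S, w')" using A w'_def by simp
    have vw: "valid f E S w'" using I(1) valid_cong[of S w w'] vS unfolding w'_def by auto
    have sCw': "(\<Sum>u\<in>{u\<in>set S. E ?v u}. w' u) = ?sC"
      using vS unfolding w'_def by (intro sum.cong) auto
    have val: "valid f E (?v#S) w'" using vw vS sCw' by (simp add: w'_def)
    have pos: "?g - ?sC \<ge> 0"
    proof -
      have "(1+\<beta>) * ?sC \<ge> ?sC" using sC0 bpos by (simp add: algebra_simps)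
      then show ?thesis using A by simp
    qed
    have wnn: "\<forall>u. w' u \<ge> 0" using I(3) pos unfolding w'_def by auto
    have Wsum: "(\<Sum>u\<in>set (?v#S). w' u) = (?g - ?sC) + (\<Sum>u\<in>set S. w u)"
    proof -
      have "(\<Sum>u\<in>set (?v#S). w' u) = w' ?v + (\<Sum>u\<in>set S. w' u)" using vS by simp
      also have "(\<Sum>u\<in>set S. w' u) = (\<Sum>u\<in>set S. w u)" using vS unfolding w'_def by (intro sum.cong) auto
      finally show ?thesis unfolding w'_def by simp
    qed
    have fb: "f (set (?v#S)) \<le> (1+\<beta>)/\<beta> * (\<Sum>u\<in>set (?v#S). w' u)"
    proof -
      have "?g \<le> (1+\<beta>)/\<beta> * (?g - ?sC)"
      proof -
        have "\<beta> * ?g \<le> (1+\<beta>) * (?g - ?sC)" using A by (simp add: algebra_simps)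
        then show ?thesis using bpos by (simp add: field_simps)
      qed
      then have "f (insert ?v (set S)) \<le> (1+\<beta>)/\<beta> * (\<Sum>u\<in>set S. w u) + (1+\<beta>)/\<beta> * (?g - ?sC)"
        using I(4) by simp
      then show ?thesis using Wsum by (simp add: distrib_left)
    qed
    show ?thesis unfolding inv1_def st'' using val wnn fb I(2) tk by auto
  qed
qed

lemma phase1_inv:
  "m \<le> length vs \<Longrightarrow> finite (set_pmf (M m)) \<and> (\<forall>st\<in>set_pmf (M m). inv1 vs E f \<beta> m st)"
proof (induction m)
  case 0 then show ?case by (simp add: Mm_0 inv1_def f0)
next
  case (Suc m)
  then have m: "m < length vs" by simp
  have IH: "finite (set_pmf (M m))" "\<forall>st\<in>set_pmf (M m). inv1 vs E f \<beta> m st" using Suc m by auto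
  have "finite (set_pmf (M (Suc m)))" unfolding Mm_Suc[OF m] using IH(1) step_finite by (simp add: step_finite)
  moreover have "\<forall>st\<in>set_pmf (M (Suc m)). inv1 vs E f \<beta> (Suc m) st"
  proof
    fix st' assume "st' \<in> set_pmf (M (Suc m))"
    then obtain st where st: "st \<in> set_pmf (M m)" "st' \<in> set_pmf (pd_step E f \<beta> p st (vs!m))"
      unfolding Mm_Suc[OF m] by auto
    obtain S w where "st = (S,w)" by force
    then show "inv1 vs E f \<beta> (Suc m) st'" using inv_step[OF m, of S w st'] st IH(2) by auto
  qed
  ultimately show ?case by blast
qed

lemma exp_const: "measure_pmf.expectation (N::'b pmf) (\<lambda>_. c) = (c::real)"
  by simp

lemma marg:
  "m \<le> length vs \<Longrightarrow> \<forall>u. measure_pmf.expectation (M m) (\<lambda>st. if u \<in> set (fst st) then 1 else 0) \<le> p"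
proof (induction m)
  case 0 then show ?case using p0 by (simp add: Mm_0)
next
  case (Suc m)
  then have m: "m < length vs" by simp
  have IH: "\<forall>u. measure_pmf.expectation (M m) (\<lambda>st. if u \<in> set (fst st) then 1 else 0) \<le> p"
    using Suc m by auto
  have fin: "finite (set_pmf (M m))" and inv: "\<forall>st\<in>set_pmf (M m). inv1 vs E f \<beta> m st"
    using phase1_inv[of m] m by auto
  show ?case
  proof
    fix u :: 'a
    let ?I = "\<lambda>st. if u \<in> set (fst st) then 1 else (0::real)"
    have "measure_pmf.expectation (M (Suc m)) ?I = measure_pmf.expectation (M m) (\<lambda>st. measure_pmf.expectation (pd_step E f \<beta> p st (vs!m)) ?I)"
      unfolding Mm_Suc[OF m] using fin step_finite by (intro exp_bind) auto
    also have "\<dots> \<le> p"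
    proof (cases "u = vs!m")
      case True
      have "measure_pmf.expectation (M m) (\<lambda>st. measure_pmf.expectation (pd_step E f \<beta> p st (vs!m)) ?I)
          \<le> measure_pmf.expectation (M m) (\<lambda>_. p)"
      proof (rule exp_mono[OF fin])
        fix st assume st: "st \<in> set_pmf (M m)"
        obtain S w where Sw: "st = (S,w)" by force
        have "u \<notin> set S" using inv st Sw True notin_take[OF dist m] unfolding inv1_def by fastforce
        then show "measure_pmf.expectation (pd_step E f \<beta> p st (vs!m)) ?I \<le> p"
          unfolding Sw using p0 p1 True by (subst step_exp) auto
      qed
      then show ?thesis by simp
    next
      case False
      have "measure_pmf.expectation (M m) (\<lambda>st. measure_pmf.expectation (pd_step E f \<beta> p st (vs!m)) ?I)
          \<le> measure_pmf.expectation (M m) ?I"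
      proof (rule exp_mono[OF fin])
        fix st assume st: "st \<in> set_pmf (M m)"
        obtain S w where Sw: "st = (S,w)" by force
        show "measure_pmf.expectation (pd_step E f \<beta> p st (vs!m)) ?I \<le> ?I st"
          unfolding Sw using p0 p1 False by (subst step_exp) (auto simp: algebra_simps)
      qed
      then show ?thesis using IH by (meson order_trans)
    qed
    finally show "measure_pmf.expectation (M (Suc m)) ?I \<le> p" .
  qed
qed

lemma phi_step:
  assumes m: "m < length vs" and inv: "inv1 vs E f \<beta> m (S,w)" and Osub: "Opt \<subseteq> set vs"
  shows "measure_pmf.expectation (pd_step E f \<beta> p (S,w) (vs!m)) (Phi vs E f \<beta> p Opt (Suc m))
     \<le> Phi vs E f \<beta> p Opt m (S,w)"
proof -
  let ?v = "vs!m"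
  define X where "X = set S"
  define P where "P = set (take m vs)"
  define OP where "OP = Opt \<inter> P"
  define g where "g = f (insert ?v X) - f X"
  define sC where "sC = (\<Sum>u\<in>{u\<in>X. E ?v u}. w u)"
  define Q where "Q = (\<Sum>u\<in>X. w u * real (cnt vs E Opt m u))"
  define R where "R = (\<Sum>u\<in>X \<inter> Opt. w u)"
  define c where "c = (1-p)/p"
  define w' where "w' = w(?v := g - sC)"
  define Ph where "Ph = Phi vs E f \<beta> p Opt m (S,w)"
  have d: "distinct vs" by (rule dist)
  have I: "set S \<subseteq> P" "\<And>u. w u \<ge> 0" using inv unfolding inv1_def P_def by auto
  have XP: "X \<subseteq> P" using I X_def by simp
  have vP: "?v \<notin> P" using notin_take[OF d m] P_def by simp
  have vX: "?v \<notin> X" using XP vP by auto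
  have Pv: "P \<subseteq> set vs" unfolding P_def by (rule set_take_subset)
  have vV: "?v \<in> set vs" using m by simp
  have tk: "set (take (Suc m) vs) = insert ?v P"
    using m by (simp add: take_Suc_conv_app_nth P_def)
  have sC0: "sC \<ge> 0" unfolding sC_def using I by (intro sum_nonneg) auto
  have key: "f (insert ?v (X \<union> OP)) + f X \<le> f (insert ?v X) + f (X \<union> OP)"
  proof -
    have "f (insert ?v X \<union> (X \<union> OP)) + f (insert ?v X \<inter> (X \<union> OP)) \<le> f (insert ?v X) + f (X \<union> OP)"
      using sm XP Pv vV unfolding submodular_on_def OP_def by (meson Int_lower2 Un_least insert_subset order_trans)
    moreover have "insert ?v X \<union> (X \<union> OP) = insert ?v (X \<union> OP)" by auto
    moreover have "insert ?v X \<inter> (X \<union> OP) = X" using vP unfolding OP_def by auto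
    ultimately show ?thesis by simp
  qed
  have OP': "Opt \<inter> set (take (Suc m) vs) = (if ?v \<in> Opt then insert ?v OP else OP)"
    using tk unfolding OP_def by auto
  have Ph_def': "Ph = f (X \<union> OP) - f X - (1+\<beta>) * Q - c * R"
    unfolding Ph_def Phi_def X_def OP_def P_def Q_def R_def c_def by simp
  have cntS: "\<And>u. u \<in> X \<Longrightarrow> cnt vs E Opt (Suc m) u = cnt vs E Opt m u + (if ?v \<in> Opt \<and> E ?v u then 1 else 0)"
    using cnt_Suc[OF d m] XP P_def by auto
  have finX: "finite X" unfolding X_def by simp
  have Q1: "(\<Sum>u\<in>X. w u * real (cnt vs E Opt (Suc m) u)) = Q + (if ?v \<in> Opt then sC else 0)"
  proof -
    have "(\<Sum>u\<in>X. w u * real (cnt vs E Opt (Suc m) u))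
        = (\<Sum>u\<in>X. w u * real (cnt vs E Opt m u) + (if ?v \<in> Opt \<and> E ?v u then w u else 0))"
      using cntS by (intro sum.cong) (auto simp: algebra_simps)
    also have "\<dots> = Q + (\<Sum>u\<in>X. if ?v \<in> Opt \<and> E ?v u then w u else 0)"
      unfolding Q_def by (simp add: sum.distrib)
    also have "(\<Sum>u\<in>X. if ?v \<in> Opt \<and> E ?v u then w u else 0) = (if ?v \<in> Opt then sC else 0)"
      unfolding sC_def using finX by (simp add: sum.inter_filter)
    finally show ?thesis .
  qed
  have Q2: "(\<Sum>u\<in>insert ?v X. w' u * real (cnt vs E Opt (Suc m) u)) = Q + (if ?v \<in> Opt then sC else 0)"
  proof -
    have "(\<Sum>u\<in>insert ?v X. w' u * real (cnt vs E Opt (Suc m) u))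
       = w' ?v * real (cnt vs E Opt (Suc m) ?v) + (\<Sum>u\<in>X. w' u * real (cnt vs E Opt (Suc m) u))"
      using finX vX by simp
    also have "(\<Sum>u\<in>X. w' u * real (cnt vs E Opt (Suc m) u)) = (\<Sum>u\<in>X. w u * real (cnt vs E Opt (Suc m) u))"
      using vX unfolding w'_def by (intro sum.cong) auto
    finally show ?thesis using Q1 cnt_new[OF d m] by simp
  qed
  have R2: "(\<Sum>u\<in>insert ?v X \<inter> Opt. w' u) = R + (if ?v \<in> Opt then g - sC else 0)"
  proof (cases "?v \<in> Opt")
    case True
    have "(\<Sum>u\<in>insert ?v X \<inter> Opt. w' u) = w' ?v + (\<Sum>u\<in>X \<inter> Opt. w' u)"
      using True vX finX by (simp add: Int_insert_left)
    also have "(\<Sum>u\<in>X \<inter> Opt. w' u) = R" unfolding R_def using vX unfolding w'_def by (intro sum.cong) auto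
    finally show ?thesis using True unfolding w'_def by simp
  next
    case False
    have "(\<Sum>u\<in>insert ?v X \<inter> Opt. w' u) = (\<Sum>u\<in>X \<inter> Opt. w' u)"
      using False by (simp add: Int_insert_left)
    also have "\<dots> = R" unfolding R_def using vX unfolding w'_def by (intro sum.cong) auto
    finally show ?thesis using False by simp
  qed
  have noadd: "Phi vs E f \<beta> p Opt (Suc m) (S,w) \<le> Ph + (if ?v \<in> Opt then g - (1+\<beta>) * sC else 0)"
  proof -
    have "Phi vs E f \<beta> p Opt (Suc m) (S,w) = f (X \<union> (Opt \<inter> set (take (Suc m) vs))) - f X
        - (1+\<beta>) * (Q + (if ?v \<in> Opt then sC else 0)) - c * R"
      unfolding Phi_def using Q1 by (simp add: X_def R_def c_def)
    moreover have "f (X \<union> (Opt \<inter> set (take (Suc m) vs))) \<le> f (X \<union> OP) + (if ?v \<in> Opt then g else 0)"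
      using key OP' unfolding g_def by auto
    ultimately show ?thesis unfolding Ph_def' by (auto simp: algebra_simps)
  qed
  have add: "Phi vs E f \<beta> p Opt (Suc m) (?v#S, w') \<le> Ph - (if ?v \<in> Opt then (1+\<beta>) * sC + c * (g - sC) else 0)"
  proof -
    have "Phi vs E f \<beta> p Opt (Suc m) (?v#S, w') = f (insert ?v X \<union> (Opt \<inter> set (take (Suc m) vs))) - f (insert ?v X)
        - (1+\<beta>) * (Q + (if ?v \<in> Opt then sC else 0)) - c * (R + (if ?v \<in> Opt then g - sC else 0))"
      unfolding Phi_def using Q2 R2 by (simp add: X_def c_def)
    moreover have "insert ?v X \<union> (Opt \<inter> set (take (Suc m) vs)) = insert ?v (X \<union> OP)"
      using OP' by auto
    ultimately show ?thesis unfolding Ph_def' using key by (auto simp: algebra_simps)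
  qed
  have pc: "p * c = 1 - p" unfolding c_def using p0 by simp
  have E: "measure_pmf.expectation (pd_step E f \<beta> p (S,w) ?v) (Phi vs E f \<beta> p Opt (Suc m))
    = (if g > (1+\<beta>) * sC then p * Phi vs E f \<beta> p Opt (Suc m) (?v#S, w') + (1-p) * Phi vs E f \<beta> p Opt (Suc m) (S,w)
       else Phi vs E f \<beta> p Opt (Suc m) (S,w))"
    using p0 p1 unfolding g_def sC_def w'_def X_def by (subst step_exp) auto
  show ?thesis
  proof (cases "g > (1+\<beta>) * sC")
    case False
    then show ?thesis using E noadd unfolding Ph_def[symmetric] by (auto split: if_splits)
  next
    case True
    have "p * Phi vs E f \<beta> p Opt (Suc m) (?v#S, w') + (1-p) * Phi vs E f \<beta> p Opt (Suc m) (S,w)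
      \<le> p * (Ph - (if ?v \<in> Opt then (1+\<beta>) * sC + c * (g - sC) else 0))
        + (1-p) * (Ph + (if ?v \<in> Opt then g - (1+\<beta>) * sC else 0))"
      using add noadd p0 p1 by (intro add_mono mult_left_mono) auto
    also have "\<dots> \<le> Ph"
    proof (cases "?v \<in> Opt")
      case False then show ?thesis by (simp add: algebra_simps)
    next
      case T: True
      have "p * (Ph - ((1+\<beta>) * sC + c * (g - sC))) + (1-p) * (Ph + (g - (1+\<beta>) * sC))
          = Ph - (1+\<beta>) * sC + (1-p) * sC - (p * c) * (g - sC) + (1-p) * (g - sC) - (1-p) * sC + (1-p) * sC"
        by (simp add: algebra_simps)
      also have "\<dots> = Ph - (\<beta> + p) * sC" by (simp only: pc) (simp add: algebra_simps)
      also have "\<dots> \<le> Ph" using sC0 bpos p0 by simp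
      finally show ?thesis using T by simp
    qed
    finally show ?thesis using E True unfolding Ph_def by simp
  qed
qed

lemma phi_total: "m \<le> length vs \<Longrightarrow> Opt \<subseteq> set vs \<Longrightarrow> measure_pmf.expectation (M m) (Phi vs E f \<beta> p Opt m) \<le> 0"
proof (induction m)
  case 0 then show ?case by (simp add: Mm_0 Phi_def)
next
  case (Suc m)
  then have m: "m < length vs" by simp
  have fin: "finite (set_pmf (M m))" and inv: "\<forall>st\<in>set_pmf (M m). inv1 vs E f \<beta> m st"
    using phase1_inv[of m] m by auto
  have "measure_pmf.expectation (M (Suc m)) (Phi vs E f \<beta> p Opt (Suc m))
     = measure_pmf.expectation (M m) (\<lambda>st. measure_pmf.expectation (pd_step E f \<beta> p st (vs!m)) (Phi vs E f \<beta> p Opt (Suc m)))"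
    unfolding Mm_Suc[OF m] using fin step_finite by (intro exp_bind) auto
  also have "\<dots> \<le> measure_pmf.expectation (M m) (Phi vs E f \<beta> p Opt m)"
  proof (rule exp_mono[OF fin])
    fix st assume st: "st \<in> set_pmf (M m)"
    obtain S w where Sw: "st = (S,w)" by force
    show "measure_pmf.expectation (pd_step E f \<beta> p st (vs!m)) (Phi vs E f \<beta> p Opt (Suc m)) \<le> Phi vs E f \<beta> p Opt m st"
      unfolding Sw using phi_step[OF m, of S w Opt] inv st Sw Suc.prems by auto
  qed
  also have "\<dots> \<le> 0" using Suc m by auto
  finally show ?case .
qed

end

theorem lemma10:
  fixes k :: nat and vs :: "'a list" and E :: "'a \<Rightarrow> 'a \<Rightarrow> bool"
    and f :: "'a set \<Rightarrow> real" and \<beta> p :: real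
  assumes "k \<ge> 1"
    and "simple_graph vs E"
    and "k_independence_ordering k vs E"
    and "\<forall>T. T \<subseteq> set vs \<longrightarrow> f T \<ge> 0"
    and "submodular_on (set vs) f"
    and "f {} = 0"
    and "\<beta> > 0" and "0 < p" and "p < 1"
  shows "OPT vs E f \<le>
    (real k * max ((1 - p) / p) (1 + \<beta>) + (1 + \<beta>) / \<beta>) / (1 - p)
      * measure_pmf.expectation (pd_rand vs E f \<beta> p) f"
proof -
  note ctx = assms(2) assms(5) assms(6) assms(7) assms(8) assms(9)
  have k1: "k \<ge> 1" and sg: "simple_graph vs E" and ko: "k_independence_ordering k vs E"
    and nn: "\<forall>T. T \<subseteq> set vs \<longrightarrow> f T \<ge> 0" and sm: "submodular_on (set vs) f"
    and bpos: "\<beta> > 0" and p0: "0 < p" and p1: "p < 1" using assms by auto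
  define n where "n = length vs"
  define Mf where "Mf = Mm vs E f \<beta> p n"
  define c where "c = (1 - p) / p"
  define K where "K = real k * max c (1 + \<beta>)"
  define B where "B = (1 + \<beta>) / \<beta>"
  have fin: "finite (set_pmf Mf)" and inv: "\<forall>st\<in>set_pmf Mf. inv1 vs E f \<beta> n st"
    using phase1_inv[OF ctx, of n] unfolding Mf_def n_def by auto
  have eqS: "{f T | T. T \<subseteq> set vs \<and> independent E T} = f ` {T. T \<subseteq> set vs \<and> independent E T}" by auto
  have finS: "finite {f T | T. T \<subseteq> set vs \<and> independent E T}"
    unfolding eqS by (rule finite_imageI, rule finite_subset[of _ "Pow (set vs)"]) auto
  have neS: "{f T | T. T \<subseteq> set vs \<and> independent E T} \<noteq> {}"
    using independent_def by fastforce
  obtain Opt where Opt: "Opt \<subseteq> set vs" "independent E Opt" "OPT vs E f = f Opt"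
    using Max_in[OF finS neS] unfolding OPT_def by auto
  have c0: "c \<ge> 0" unfolding c_def using p0 p1 by simp
  have K0: "K \<ge> 0" unfolding K_def using bpos by simp
  have B0: "B \<ge> 0" unfolding B_def using bpos by simp
  have cK: "c \<le> K"
  proof -
    have "c \<le> max c (1+\<beta>)" by simp
    also have "\<dots> = 1 * max c (1+\<beta>)" by simp
    also have "\<dots> \<le> real k * max c (1+\<beta>)" using k1 c0 by (intro mult_right_mono) auto
    finally show ?thesis unfolding K_def .
  qed
  have bK: "(1+\<beta>) * real k \<le> K" unfolding K_def using bpos by (simp add: mult.commute mult_left_mono)
  have pt: "f (Opt \<union> set (fst st)) \<le> Phi vs E f \<beta> p Opt n st + (K + B) * f (pd_phase2 E (fst st))"
    if st: "st \<in> set_pmf Mf" for st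
  proof -
    obtain S w where Sw: "st = (S,w)" by force
    have I: "valid f E S w" "set S \<subseteq> set vs" "\<And>u. w u \<ge> 0" "f (set S) \<le> B * (\<Sum>u\<in>set S. w u)"
    proof -
      have "inv1 vs E f \<beta> n (S,w)" using inv st Sw by auto
      then show "valid f E S w" "set S \<subseteq> set vs" "\<And>u. w u \<ge> 0" "f (set S) \<le> B * (\<Sum>u\<in>set S. w u)"
        unfolding inv1_def B_def n_def by auto
    qed
    define W where "W = (\<Sum>u\<in>set S. w u)"
    have Wout: "W \<le> f (pd_phase2 E S)" unfolding W_def using phase2_bound[OF sg I(1,2) sm assms(6) I(3)] .
    have QR: "(1+\<beta>) * (\<Sum>u\<in>set S. w u * real (cnt vs E Opt n u)) + c * (\<Sum>u\<in>set S \<inter> Opt. w u) \<le> K * W"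
    proof -
      have "(1+\<beta>) * (\<Sum>u\<in>set S. w u * real (cnt vs E Opt n u)) + c * (\<Sum>u\<in>set S \<inter> Opt. w u)
          = (\<Sum>u\<in>set S. (1+\<beta>) * (w u * real (cnt vs E Opt n u)) + c * (if u \<in> Opt then w u else 0))"
        by (simp add: sum.inter_restrict sum_distrib_left sum.distrib)
      also have "\<dots> \<le> (\<Sum>u\<in>set S. K * w u)"
      proof (rule sum_mono)
        fix u assume u: "u \<in> set S"
        then have uv: "u \<in> set vs" using I(2) by auto
        have wu: "w u \<ge> 0" by (rule I(3))
        show "(1+\<beta>) * (w u * real (cnt vs E Opt n u)) + c * (if u \<in> Opt then w u else 0) \<le> K * w u"
        proof (cases "u \<in> Opt")
          case True
          then have "cnt vs E Opt n u = 0" using cnt_bound(2)[OF sg ko Opt(2,1) uv] n_def by simp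
          then show ?thesis using True cK wu by (simp add: mult_right_mono)
        next
          case False
          have "cnt vs E Opt n u \<le> k" using cnt_bound(1)[OF sg ko Opt(2,1) uv] n_def by simp
          then have "w u * real (cnt vs E Opt n u) \<le> w u * real k" using wu by (simp add: mult_left_mono)
          then have "(1+\<beta>) * (w u * real (cnt vs E Opt n u)) \<le> (1+\<beta>) * (w u * real k)"
            using bpos by (simp add: mult_left_mono)
          also have "\<dots> = ((1+\<beta>) * real k) * w u" by simp
          also have "\<dots> \<le> K * w u" using bK wu by (simp add: mult_right_mono)
          finally show ?thesis using False by simp
        qed
      qed
      also have "\<dots> = K * W" unfolding W_def by (simp add: sum_distrib_left)
      finally show ?thesis .
    qed
    have tk: "set (take n vs) = set vs" unfolding n_def by simp
    have Ph: "Phi vs E f \<beta> p Opt n st = f (set S \<union> Opt) - f (set S)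
        - (1+\<beta>) * (\<Sum>u\<in>set S. w u * real (cnt vs E Opt n u)) - c * (\<Sum>u\<in>set S \<inter> Opt. w u)"
      unfolding Phi_def Sw c_def tk using Opt(1) by (simp add: Int_absorb2)
    have a1: "f (Opt \<union> set S) \<le> Phi vs E f \<beta> p Opt n st + B * W + K * W"
      using Ph QR I(4) unfolding W_def by (simp add: Un_commute)
    have a2: "(K + B) * W \<le> (K + B) * f (pd_phase2 E S)" using Wout K0 B0 by (simp add: mult_left_mono)
    have a3: "B * W + K * W = (K + B) * W" by (simp add: algebra_simps)
    show ?thesis unfolding Sw using a1 a2 a3 Sw by simp
  qed
  have int: "integrable (measure_pmf Mf) g" for g :: "_ \<Rightarrow> real" using fin by (rule integrable_measure_pmf_finite)
  have "measure_pmf.expectation Mf (\<lambda>st. f (Opt \<union> set (fst st)))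
      \<le> measure_pmf.expectation Mf (\<lambda>st. Phi vs E f \<beta> p Opt n st + (K + B) * f (pd_phase2 E (fst st)))"
    using pt by (intro exp_mono[OF fin]) auto
  also have "\<dots> = measure_pmf.expectation Mf (Phi vs E f \<beta> p Opt n) + (K + B) * measure_pmf.expectation Mf (\<lambda>st. f (pd_phase2 E (fst st)))"
    by (simp add: integral_add int)
  also have "measure_pmf.expectation Mf (Phi vs E f \<beta> p Opt n) \<le> 0"
    using phi_total[OF ctx, of n Opt] Opt(1) unfolding Mf_def n_def by simp
  also have "measure_pmf.expectation Mf (\<lambda>st. f (pd_phase2 E (fst st))) = measure_pmf.expectation (pd_rand vs E f \<beta> p) f"
    unfolding pd_rand_def Mf_def n_def Mm_full by simp
  finally have up: "measure_pmf.expectation Mf (\<lambda>st. f (Opt \<union> set (fst st))) \<le> (K + B) * measure_pmf.expectation (pd_rand vs E f \<beta> p) f"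
    by simp
  define N where "N = map_pmf (\<lambda>st. set (fst st)) Mf"
  have "(1 - p) * f (Opt \<union> {}) \<le> measure_pmf.expectation N (\<lambda>A. f (Opt \<union> A))"
  proof (rule bfns[where L = vs])
    show "\<forall>A\<in>set_pmf N. A \<subseteq> set vs" using inv unfolding N_def inv1_def n_def by auto
    show "\<forall>A. A \<subseteq> set vs \<longrightarrow> f (Opt \<union> A) \<ge> 0" using nn Opt(1) by auto
    show "submodular_on (set vs) (\<lambda>A. f (Opt \<union> A))"
      unfolding submodular_on_def
    proof (intro allI impI)
      fix A B assume AB: "A \<subseteq> set vs" "B \<subseteq> set vs"
      have "f ((Opt \<union> A) \<union> (Opt \<union> B)) + f ((Opt \<union> A) \<inter> (Opt \<union> B)) \<le> f (Opt \<union> A) + f (Opt \<union> B)"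
        using sm AB Opt(1) unfolding submodular_on_def by auto
      moreover have "(Opt \<union> A) \<union> (Opt \<union> B) = Opt \<union> (A \<union> B)" by auto
      moreover have "(Opt \<union> A) \<inter> (Opt \<union> B) = Opt \<union> (A \<inter> B)" by auto
      ultimately show "f (Opt \<union> (A \<union> B)) + f (Opt \<union> (A \<inter> B)) \<le> f (Opt \<union> A) + f (Opt \<union> B)" by simp
    qed
    show "\<forall>u\<in>set vs. measure_pmf.expectation N (\<lambda>A. if u \<in> A then 1 else 0) \<le> p"
      using marg[OF ctx, of n] unfolding N_def Mf_def n_def by simp
    show "p \<ge> 0" using p0 by simp
  qed
  then have low: "(1 - p) * f Opt \<le> measure_pmf.expectation Mf (\<lambda>st. f (Opt \<union> set (fst st)))"
    unfolding N_def by simp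
  have "(1 - p) * OPT vs E f \<le> (K + B) * measure_pmf.expectation (pd_rand vs E f \<beta> p) f"
    using low up Opt(3) by simp
  then have "OPT vs E f \<le> (K + B) * measure_pmf.expectation (pd_rand vs E f \<beta> p) f / (1 - p)"
    using p1 by (simp add: field_simps)
  then show ?thesis unfolding K_def B_def c_def by (simp add: field_simps)
qed

end
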